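(* Let $R$ be an $n$-ary relation on a domain $\mathcal{D}$ with finite ternarity that has no unary Cartesian factor. Then $\mathrm{ter}(R)$ and $n$ have the same parity.
   Context: Relations are attributed: $R\subseteq\mathcal{D}^\Sigma$, $\Sigma$ finite, arity $n=|\Sigma|$; $\pi_\Gamma$ restricts tuples to $\Gamma$; the join of $R_i\subseteq\mathcal{D}^{\Lambda_i}$ is $\{a\in\mathcal{D}^{\cup\Lambda_i}:a|_{\Lambda_i}\in R_i\ \forall i\}$. $R$ has a unary Cartesian factor if for some $i\in\Sigma$ there are $P\subseteq\mathcal{D}^{\{i\}}$ and $Q\subseteq\mathcal{D}^{\Sigma\setminus\{i\}}$ with $R=\{a: a|_{\{i\}}\in P,\ a|_{\Sigma\setminus\{i\}}\in Q\}$. Bonds: relations $R_i\subseteq\mathcal{D}^{\Lambda_i}$ are bondable if no attribute lies in three or more $\Lambda_i$; their bond is $\pi_\Gamma[R_1\Join\dots\Join R_m]$ where $\Gamma$ is the set of attributes lying in exactly one $\Lambda_i$. A bond is subternaric if all factors have arity $\le3$. The ternarity $\mathrm{ter}(R)$ is the minimal number of factors of arity $3$ over all representations of $R$ as a subternaric bond (a relation of arity $\le3$ counts as a one-factor bond of itself), and $\infty$ if none exists. *)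

theory Defs
  imports "HOL-Library.FuncSet" "HOL-Library.Extended_Nat"
begin

text \<open>A factor of a bond is a pair (\<Lambda>, S) with S a relation over attributes \<Lambda>.\<close>

definition tuples :: "'d set \<Rightarrow> nat set \<Rightarrow> (nat \<Rightarrow> 'd) set" where
  "tuples D \<Sigma> = PiE \<Sigma> (\<lambda>_. D)"

definition proj :: "nat set \<Rightarrow> (nat \<Rightarrow> 'd) set \<Rightarrow> (nat \<Rightarrow> 'd) set" where
  "proj \<Gamma> R = (\<lambda>a. restrict a \<Gamma>) ` R"

definition join :: "'d set \<Rightarrow> (nat set \<times> (nat \<Rightarrow> 'd) set) list \<Rightarrow> (nat \<Rightarrow> 'd) set" where
  "join D Fs = {a \<in> tuples D (\<Union>i<length Fs. fst (Fs ! i)).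
                 \<forall>i<length Fs. restrict a (fst (Fs ! i)) \<in> snd (Fs ! i)}"

definition occ :: "(nat set \<times> (nat \<Rightarrow> 'd) set) list \<Rightarrow> nat \<Rightarrow> nat" where
  "occ Fs x = card {i. i < length Fs \<and> x \<in> fst (Fs ! i)}"

definition bondable :: "(nat set \<times> (nat \<Rightarrow> 'd) set) list \<Rightarrow> bool" where
  "bondable Fs \<longleftrightarrow> (\<forall>x. occ Fs x \<le> 2)"

definition free_attrs :: "(nat set \<times> (nat \<Rightarrow> 'd) set) list \<Rightarrow> nat set" where
  "free_attrs Fs = {x. occ Fs x = 1}"

definition bond :: "'d set \<Rightarrow> (nat set \<times> (nat \<Rightarrow> 'd) set) list \<Rightarrow> (nat \<Rightarrow> 'd) set" where
  "bond D Fs = proj (free_attrs Fs) (join D Fs)"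

definition subternaric_bond_rep ::
  "'d set \<Rightarrow> nat set \<Rightarrow> (nat \<Rightarrow> 'd) set \<Rightarrow> (nat set \<times> (nat \<Rightarrow> 'd) set) list \<Rightarrow> bool" where
  "subternaric_bond_rep D \<Sigma> R Fs \<longleftrightarrow>
     (\<forall>i<length Fs. finite (fst (Fs ! i)) \<and> snd (Fs ! i) \<subseteq> tuples D (fst (Fs ! i))
                    \<and> card (fst (Fs ! i)) \<le> 3)
     \<and> bondable Fs \<and> free_attrs Fs = \<Sigma> \<and> bond D Fs = R"

definition num_ternary :: "(nat set \<times> (nat \<Rightarrow> 'd) set) list \<Rightarrow> nat" where
  "num_ternary Fs = card {i. i < length Fs \<and> card (fst (Fs ! i)) = 3}"

definition ter :: "'d set \<Rightarrow> nat set \<Rightarrow> (nat \<Rightarrow> 'd) set \<Rightarrow> enat" where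
  "ter D \<Sigma> R = Inf {enat (num_ternary Fs) | Fs. subternaric_bond_rep D \<Sigma> R Fs}"

definition has_unary_cartesian_factor :: "'d set \<Rightarrow> nat set \<Rightarrow> (nat \<Rightarrow> 'd) set \<Rightarrow> bool" where
  "has_unary_cartesian_factor D \<Sigma> R \<longleftrightarrow>
     (\<exists>i\<in>\<Sigma>. \<exists>P Q. P \<subseteq> tuples D {i} \<and> Q \<subseteq> tuples D (\<Sigma> - {i}) \<and>
        R = {a \<in> tuples D \<Sigma>. restrict a {i} \<in> P \<and> restrict a (\<Sigma> - {i}) \<in> Q})"

end

theory Submission
  imports Defs
begin

lemma card_of_bool_sum:
  assumes "finite U" "A \<subseteq> U"
  shows "(\<Sum>x\<in>U. of_bool (x \<in> A) :: nat) = card A"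
proof -
  have "(\<Sum>x\<in>U. of_bool (x \<in> A) :: nat) = (\<Sum>x\<in>{x\<in>U. x \<in> A}. 1)"
    using sum.inter_filter[OF assms(1), of "\<lambda>_. 1::nat" "\<lambda>x. x \<in> A"] by (simp add: of_bool_def)
  also have "{x\<in>U. x \<in> A} = A" using assms by auto
  also have "(\<Sum>x\<in>A. 1) = card A" by simp
  finally show ?thesis .
qed

lemma weight_eq:
  assumes "\<forall>i<length Fs. finite (fst (Fs!i))"
  shows "(\<Sum>i<length Fs. card (fst (Fs!i))) = (\<Sum>x\<in>(\<Union>i<length Fs. fst (Fs!i)). occ Fs x)"
proof -
  let ?U = "\<Union>i<length Fs. fst (Fs!i)"
  have fU: "finite ?U" using assms by auto
  have "(\<Sum>i<length Fs. card (fst (Fs!i))) = (\<Sum>i<length Fs. \<Sum>x\<in>?U. of_bool (x \<in> fst (Fs!i)))"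
    by (rule sum.cong[OF refl], rule card_of_bool_sum[symmetric, OF fU]) auto
  also have "\<dots> = (\<Sum>x\<in>?U. \<Sum>i<length Fs. of_bool (x \<in> fst (Fs!i)))"
    by (rule sum.swap)
  also have "\<dots> = (\<Sum>x\<in>?U. occ Fs x)"
    unfolding occ_def
    by (rule sum.cong[OF refl], subst card_of_bool_sum[symmetric, of "{..<length Fs}"]) auto
  finally show ?thesis .
qed

lemma parity_lemma:
  assumes "subternaric_bond_rep D \<Sigma> R Fs" "\<forall>i<length Fs. card (fst (Fs!i)) \<noteq> 1"
  shows "even (num_ternary Fs) \<longleftrightarrow> even (card \<Sigma>)"
proof -
  let ?U = "\<Union>i<length Fs. fst (Fs!i)"
  have fin: "\<forall>i<length Fs. finite (fst (Fs!i))" and c3: "\<forall>i<length Fs. card (fst (Fs!i)) \<le> 3"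
    and bd: "bondable Fs" and fr: "free_attrs Fs = \<Sigma>"
    using assms(1) unfolding subternaric_bond_rep_def by auto
  have fU: "finite ?U" using fin by auto
  have "even (\<Sum>i<length Fs. card (fst (Fs!i))) \<longleftrightarrow> even (card {i\<in>{..<length Fs}. odd (card (fst (Fs!i)))})"
    by (rule even_sum_iff) simp
  also have "{i\<in>{..<length Fs}. odd (card (fst (Fs!i)))} = {i. i < length Fs \<and> card (fst (Fs!i)) = 3}"
  proof -
    have "odd (c::nat) \<longleftrightarrow> c = 3" if "c \<le> 3" "c \<noteq> 1" for c
      using that by (cases c; cases "c - 1"; cases "c - 2"; auto)
    then show ?thesis using c3 assms(2) by auto
  qed
  finally have e1: "even (\<Sum>i<length Fs. card (fst (Fs!i))) \<longleftrightarrow> even (num_ternary Fs)"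
    unfolding num_ternary_def .
  have "even (\<Sum>x\<in>?U. occ Fs x) \<longleftrightarrow> even (card {x\<in>?U. odd (occ Fs x)})"
    by (rule even_sum_iff[OF fU])
  also have "{x\<in>?U. odd (occ Fs x)} = \<Sigma>"
  proof -
    have le2: "occ Fs x \<le> 2" for x using bd unfolding bondable_def by auto
    have "odd (occ Fs x) \<longleftrightarrow> occ Fs x = 1" for x
      using le2[of x] by (cases "occ Fs x"; cases "occ Fs x - 1"; auto)
    moreover have "occ Fs x = 1 \<Longrightarrow> x \<in> ?U" for x
    proof (rule ccontr)
      assume "occ Fs x = 1" "x \<notin> ?U"
      then have "{i. i < length Fs \<and> x \<in> fst (Fs ! i)} = {}" by auto
      then show False using \<open>occ Fs x = 1\<close> unfolding occ_def by (metis card.empty zero_neq_one)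
    qed
    ultimately show ?thesis using fr unfolding free_attrs_def by auto
  qed
  finally show ?thesis using e1 weight_eq[OF fin] by simp
qed

lemma restrict_tuples:
  assumes "b \<in> tuples D B" "A \<subseteq> B" shows "restrict b A \<in> tuples D A"
  using assms unfolding tuples_def by (auto simp: PiE_iff)

lemma occ_pos_in_U:
  assumes "occ Fs x \<noteq> 0" shows "x \<in> (\<Union>i<length Fs. fst (Fs!i))"
proof (rule ccontr)
  assume "x \<notin> (\<Union>i<length Fs. fst (Fs!i))"
  then have "{i. i < length Fs \<and> x \<in> fst (Fs ! i)} = {}" by auto
  then show False using assms unfolding occ_def by (metis card.empty)
qed

lemma occ1_only:
  assumes "occ Fs x = 1" "k < length Fs" "x \<in> fst (Fs!k)" "i < length Fs" "i \<noteq> k"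
  shows "x \<notin> fst (Fs!i)"
proof
  assume "x \<in> fst (Fs!i)"
  then have "{k, i} \<subseteq> {i. i < length Fs \<and> x \<in> fst (Fs ! i)}" using assms by auto
  from card_mono[OF _ this] have "2 \<le> occ Fs x" unfolding occ_def using assms by auto
  then show False using assms by simp
qed

lemma free_unary_cart:
  assumes rep: "subternaric_bond_rep D \<Sigma> R Fs" and k: "k < length Fs" "fst (Fs!k) = {x}"
    and ox: "occ Fs x = 1"
  shows "has_unary_cartesian_factor D \<Sigma> R"
proof -
  let ?U = "\<Union>i<length Fs. fst (Fs!i)"
  have fr: "free_attrs Fs = \<Sigma>" and R: "R = (\<lambda>a. restrict a \<Sigma>) ` join D Fs"
    using rep k unfolding subternaric_bond_rep_def bond_def proj_def by auto
  have "snd (Fs!k) \<subseteq> tuples D (fst (Fs!k))" using rep k unfolding subternaric_bond_rep_def by blast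
  then have Sk: "snd (Fs!k) \<subseteq> tuples D {x}" using k by simp
  have xS: "x \<in> \<Sigma>" using fr ox unfolding free_attrs_def by auto
  have SU: "\<Sigma> \<subseteq> ?U" using fr occ_pos_in_U[of Fs] unfolding free_attrs_def by fastforce
  have oth: "\<And>i. i < length Fs \<Longrightarrow> i \<noteq> k \<Longrightarrow> x \<notin> fst (Fs!i)"
    using occ1_only[OF ox k(1)] k by auto
  define Q where "Q = {restrict b (\<Sigma> - {x}) | b. b \<in> tuples D ?U \<and>
      (\<forall>i<length Fs. i \<noteq> k \<longrightarrow> restrict b (fst (Fs!i)) \<in> snd (Fs!i))}"
  have Qsub: "Q \<subseteq> tuples D (\<Sigma> - {x})"
    unfolding Q_def using SU by (auto intro!: restrict_tuples)
  have "R = {a \<in> tuples D \<Sigma>. restrict a {x} \<in> snd (Fs!k) \<and> restrict a (\<Sigma> - {x}) \<in> Q}"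
  proof (intro equalityI subsetI)
    fix a assume "a \<in> R"
    then obtain b where b: "b \<in> join D Fs" and a: "a = restrict b \<Sigma>" using R by auto
    have bU: "b \<in> tuples D ?U" and bi: "\<forall>i<length Fs. restrict b (fst (Fs!i)) \<in> snd (Fs!i)"
      using b unfolding join_def by auto
    have "a \<in> tuples D \<Sigma>" using a bU SU by (auto intro!: restrict_tuples)
    moreover have "restrict a {x} \<in> snd (Fs!k)" using bi k xS a
      by (metis Int_insert_right_if1 inf_bot_right restrict_restrict)
    moreover have "restrict a (\<Sigma> - {x}) \<in> Q" unfolding Q_def using bU bi a
      by (auto simp: restrict_restrict Int_absorb1 Int_Diff intro!: exI[of _ b])
    ultimately show "a \<in> {a \<in> tuples D \<Sigma>. restrict a {x} \<in> snd (Fs!k) \<and> restrict a (\<Sigma> - {x}) \<in> Q}"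
      by blast
  next
    fix a assume "a \<in> {a \<in> tuples D \<Sigma>. restrict a {x} \<in> snd (Fs!k) \<and> restrict a (\<Sigma> - {x}) \<in> Q}"
    then have aT: "a \<in> tuples D \<Sigma>" and ax: "restrict a {x} \<in> snd (Fs!k)"
      and aQ: "restrict a (\<Sigma> - {x}) \<in> Q" by auto
    from aQ obtain b where ab: "restrict a (\<Sigma> - {x}) = restrict b (\<Sigma> - {x})"
      and bU: "b \<in> tuples D ?U"
      and bi: "\<forall>i<length Fs. i \<noteq> k \<longrightarrow> restrict b (fst (Fs!i)) \<in> snd (Fs!i)"
      unfolding Q_def by auto
    define c where "c = b(x := a x)"
    have xU: "x \<in> ?U" using SU xS by auto
    have cU: "c \<in> tuples D ?U" using bU aT xS xU unfolding c_def tuples_def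
      by (auto simp: PiE_iff extensional_def)
    have ci: "restrict c (fst (Fs!i)) \<in> snd (Fs!i)" if "i < length Fs" for i
    proof (cases "i = k")
      case True
      have "restrict c {x} = restrict a {x}" unfolding c_def by (auto simp: restrict_def fun_eq_iff)
      then show ?thesis using True ax k by simp
    next
      case False
      have "restrict c (fst (Fs!i)) = restrict b (fst (Fs!i))"
        using oth[OF that False] unfolding c_def by (auto simp: restrict_def fun_eq_iff)
      then show ?thesis using bi that False by simp
    qed
    have "c \<in> join D Fs" unfolding join_def using cU ci by auto
    moreover have "a = restrict c \<Sigma>"
    proof (rule ext)
      fix y
      show "a y = restrict c \<Sigma> y"
      proof (cases "y \<in> \<Sigma>")
        case True
        then show ?thesis
        proof (cases "y = x")
          case False
          then have "restrict a (\<Sigma> - {x}) y = restrict b (\<Sigma> - {x}) y" using ab by simp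
          then show ?thesis using True False unfolding c_def by simp
        qed (simp add: c_def)
      next
        case False
        then show ?thesis using aT unfolding tuples_def by (auto simp: PiE_iff extensional_def)
      qed
    qed
    ultimately show "a \<in> R" using R by auto
  qed
  then show ?thesis unfolding has_unary_cartesian_factor_def using xS Sk Qsub by blast
qed

definition weight :: "(nat set \<times> (nat \<Rightarrow> 'd) set) list \<Rightarrow> nat" where
  "weight Fs = (\<Sum>i<length Fs. card (fst (Fs!i)))"

lemma reduce:
  assumes rep: "subternaric_bond_rep D \<Sigma> R Fs" and k: "k < length Fs" "fst (Fs!k) = {x}"
    and ox: "occ Fs x = 2"
  shows "\<exists>Fs'. subternaric_bond_rep D \<Sigma> R Fs' \<and> num_ternary Fs' \<le> num_ternary Fs
            \<and> weight Fs' < weight Fs"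
proof -
  let ?I = "{i. i < length Fs \<and> x \<in> fst (Fs ! i)}"
  have fI: "finite ?I" by (rule finite_subset[of _ "{..<length Fs}"]) auto
  have kI: "k \<in> ?I" using k by auto
  obtain j where jI: "j \<in> ?I" and jk: "j \<noteq> k"
  proof -
    have "\<not> ?I \<subseteq> {k}"
    proof
      assume "?I \<subseteq> {k}"
      then have "card ?I \<le> 1" using card_mono[of "{k}" ?I] by simp
      then show False using ox unfolding occ_def by simp
    qed
    then show ?thesis using that by blast
  qed
  have j: "j < length Fs" "x \<in> fst (Fs!j)" using jI by auto
  have oth: "x \<notin> fst (Fs!i)" if "i < length Fs" "i \<noteq> j" "i \<noteq> k" for i
  proof
    assume "x \<in> fst (Fs!i)"
    then have "{i, j, k} \<subseteq> ?I" using that j k by auto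
    from card_mono[OF fI this] have "3 \<le> card ?I" using that jk by auto
    then show False using ox unfolding occ_def by simp
  qed
  have fin: "\<forall>i<length Fs. finite (fst (Fs!i))"
    and tup: "\<forall>i<length Fs. snd (Fs!i) \<subseteq> tuples D (fst (Fs!i))"
    and c3: "\<forall>i<length Fs. card (fst (Fs!i)) \<le> 3"
    and bd: "bondable Fs" and fr: "free_attrs Fs = \<Sigma>" and R: "bond D Fs = R"
    using rep unfolding subternaric_bond_rep_def by auto
  define Lj where "Lj = fst (Fs!j) - {x}"
  define T where "T = {restrict b Lj | b. b \<in> snd (Fs!j) \<and> restrict b {x} \<in> snd (Fs!k)}"
  define Fs' where "Fs' = Fs[k := ({}, {\<lambda>_. undefined}), j := (Lj, T)]"
  have len: "length Fs' = length Fs" unfolding Fs'_def by simp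
  have nth': "Fs'!i = (if i = j then (Lj, T) else if i = k then ({}, {\<lambda>_. undefined}) else Fs!i)"
    if "i < length Fs" for i
    unfolding Fs'_def using that j k by auto
  have memL: "y \<in> fst (Fs'!i) \<longleftrightarrow> y \<in> fst (Fs!i)" if "i < length Fs" "y \<noteq> x" for i y
    using nth'[OF that(1)] that k unfolding Lj_def by auto
  have memx: "x \<notin> fst (Fs'!i)" if "i < length Fs" for i
    using nth'[OF that] oth[OF that] unfolding Lj_def by auto
  have occ_y: "occ Fs' y = occ Fs y" if "y \<noteq> x" for y
    unfolding occ_def len using memL[OF _ that] by metis
  have occ_x: "occ Fs' x = 0" unfolding occ_def using memx len by auto
  have bd': "bondable Fs'" using bd occ_y occ_x unfolding bondable_def by (metis zero_le)
  have fr': "free_attrs Fs' = \<Sigma>"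
  proof -
    have "occ Fs' y = 1 \<longleftrightarrow> occ Fs y = 1" for y
      using occ_y[of y] occ_x ox by (cases "y = x") auto
    then show ?thesis using fr unfolding free_attrs_def by auto
  qed
  have props': "\<forall>i<length Fs'. finite (fst (Fs'!i)) \<and> snd (Fs'!i) \<subseteq> tuples D (fst (Fs'!i))
                    \<and> card (fst (Fs'!i)) \<le> 3"
  proof (intro allI impI)
    fix i assume "i < length Fs'"
    then have i: "i < length Fs" using len by simp
    have Tsub: "T \<subseteq> tuples D Lj" unfolding T_def Lj_def using tup j
      by (auto intro!: restrict_tuples)
    have "card Lj \<le> 3" unfolding Lj_def using c3 j
      by (meson card_Diff1_le fin le_trans)
    then show "finite (fst (Fs'!i)) \<and> snd (Fs'!i) \<subseteq> tuples D (fst (Fs'!i)) \<and> card (fst (Fs'!i)) \<le> 3"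
      using nth'[OF i] fin tup c3 i Tsub unfolding Lj_def by (auto simp: tuples_def)
  qed
  let ?U = "\<Union>i<length Fs. fst (Fs!i)"
  let ?U' = "\<Union>i<length Fs'. fst (Fs'!i)"
  have U': "?U' = ?U - {x}"
    using memL memx len by (auto, metis lessThan_iff)
  have SU: "\<Sigma> \<subseteq> ?U'" using fr' occ_pos_in_U[of Fs'] unfolding free_attrs_def by fastforce
  have xS: "x \<notin> \<Sigma>" using fr ox unfolding free_attrs_def by auto
  have bond': "bond D Fs' = R"
  proof -
    have "proj \<Sigma> (join D Fs') = proj \<Sigma> (join D Fs)"
    proof (intro equalityI subsetI)
      fix a assume "a \<in> proj \<Sigma> (join D Fs')"
      then obtain b where b: "b \<in> join D Fs'" and a: "a = restrict b \<Sigma>" unfolding proj_def by auto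
      have bU: "b \<in> tuples D ?U'" and bi: "\<forall>i<length Fs. restrict b (fst (Fs'!i)) \<in> snd (Fs'!i)"
        using b len unfolding join_def by auto
      have "restrict b (fst (Fs'!j)) \<in> snd (Fs'!j)" using bi j by auto
      then have "restrict b Lj \<in> T" using nth'[OF j(1)] by simp
      then obtain c where c: "c \<in> snd (Fs!j)" "restrict c {x} \<in> snd (Fs!k)"
        and bc: "restrict b Lj = restrict c Lj" unfolding T_def by auto
      have cT: "c \<in> tuples D (fst (Fs!j))" using c tup j by auto
      define e where "e = b(x := c x)"
      have xU: "x \<in> ?U" using j by auto
      have eU: "e \<in> tuples D ?U"
      proof -
        have "c x \<in> D" using cT j unfolding tuples_def by auto
        then show ?thesis using bU xU U' unfolding e_def tuples_def
          by (auto simp: PiE_iff extensional_def)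
      qed
      have ei: "restrict e (fst (Fs!i)) \<in> snd (Fs!i)" if i: "i < length Fs" for i
      proof -
        consider "i = j" | "i = k" | "i \<noteq> j" "i \<noteq> k" by blast
        then show ?thesis
        proof cases
          case 1
          have "restrict e (fst (Fs!j)) = c"
          proof (rule ext)
            fix y show "restrict e (fst (Fs!j)) y = c y"
            proof (cases "y \<in> fst (Fs!j)")
              case True
              show ?thesis
              proof (cases "y = x")
                case False
                then have "restrict b Lj y = restrict c Lj y" using bc by simp
                then show ?thesis using True False unfolding e_def Lj_def by simp
              qed (use True in \<open>simp add: e_def\<close>)
            next
              case False
              then show ?thesis using cT unfolding tuples_def by (auto simp: PiE_iff extensional_def)
            qed
          qed
          then show ?thesis using 1 c by simp
        next
          case 2
          have "restrict e {x} = restrict c {x}" unfolding e_def by (auto simp: restrict_def fun_eq_iff)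
          then show ?thesis using 2 c k by simp
        next
          case 3
          have "restrict e (fst (Fs!i)) = restrict b (fst (Fs!i))"
            using oth[OF i 3] unfolding e_def by (auto simp: restrict_def fun_eq_iff)
          moreover have "Fs'!i = Fs!i" using nth'[OF i] 3 by simp
          moreover have "restrict b (fst (Fs'!i)) \<in> snd (Fs'!i)" using bi i by blast
          ultimately show ?thesis by simp
        qed
      qed
      have "e \<in> join D Fs" unfolding join_def using eU ei by auto
      moreover have "a = restrict e \<Sigma>" unfolding a e_def using xS
        by (auto simp: restrict_def fun_eq_iff)
      ultimately show "a \<in> proj \<Sigma> (join D Fs)" unfolding proj_def by auto
    next
      fix a assume "a \<in> proj \<Sigma> (join D Fs)"
      then obtain b where b: "b \<in> join D Fs" and a: "a = restrict b \<Sigma>" unfolding proj_def by auto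
      have bU: "b \<in> tuples D ?U" and bi: "\<forall>i<length Fs. restrict b (fst (Fs!i)) \<in> snd (Fs!i)"
        using b unfolding join_def by auto
      define e where "e = restrict b ?U'"
      have eU: "e \<in> tuples D ?U'" unfolding e_def using bU U' by (auto intro!: restrict_tuples)
      have ei: "restrict e (fst (Fs'!i)) \<in> snd (Fs'!i)" if i: "i < length Fs" for i
      proof -
        consider "i = j" | "i = k" | "i \<noteq> j" "i \<noteq> k" by blast
        then show ?thesis
        proof cases
          case 1
          have e1: "restrict e Lj = restrict (restrict b (fst (Fs!j))) Lj"
            unfolding e_def Lj_def using U' j by (auto simp: restrict_def fun_eq_iff)
          have e2: "restrict (restrict b (fst (Fs!j))) {x} = restrict b {x}"
            using j by (auto simp: restrict_def fun_eq_iff)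
          have e3: "restrict b (fst (Fs!j)) \<in> snd (Fs!j)" using bi j by blast
          have e4: "restrict b {x} \<in> snd (Fs!k)" using bi k(1) unfolding k(2)[symmetric] by blast
          have "restrict e Lj \<in> T" unfolding T_def
            by (rule CollectI, rule exI[of _ "restrict b (fst (Fs!j))"]) (use e1 e2 e3 e4 in simp)
          then show ?thesis using nth'[OF i] 1 by simp
        next
          case 2
          then show ?thesis using nth'[OF i] jk by (auto simp: restrict_def fun_eq_iff)
        next
          case 3
          have "restrict e (fst (Fs!i)) = restrict b (fst (Fs!i))"
            unfolding e_def using U' i oth[OF i 3] by (auto simp: restrict_def fun_eq_iff)
          moreover have "Fs'!i = Fs!i" using nth'[OF i] 3 by simp
          ultimately show ?thesis using bi i by simp
        qed
      qed
      have "e \<in> join D Fs'" unfolding join_def using eU ei len by auto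
      moreover have "a = restrict e \<Sigma>" unfolding a e_def using SU
        by (auto simp: restrict_def fun_eq_iff)
      ultimately show "a \<in> proj \<Sigma> (join D Fs')" unfolding proj_def by auto
    qed
    then show ?thesis using R fr fr' unfolding bond_def by simp
  qed
  have rep': "subternaric_bond_rep D \<Sigma> R Fs'"
    unfolding subternaric_bond_rep_def using props' bd' fr' bond' by blast
  have cj: "card Lj < card (fst (Fs!j))" unfolding Lj_def using j fin
    by (meson card_Diff1_less)
  have num: "num_ternary Fs' \<le> num_ternary Fs"
  proof -
    have "{i. i < length Fs' \<and> card (fst (Fs'!i)) = 3} \<subseteq> {i. i < length Fs \<and> card (fst (Fs!i)) = 3}"
    proof
      fix i assume "i \<in> {i. i < length Fs' \<and> card (fst (Fs'!i)) = 3}"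
      then have i: "i < length Fs" and ci: "card (fst (Fs'!i)) = 3" using len by auto
      show "i \<in> {i. i < length Fs \<and> card (fst (Fs!i)) = 3}"
        using nth'[OF i] ci i cj c3 j by (auto split: if_splits)
    qed
    then show ?thesis unfolding num_ternary_def by (rule card_mono[rotated]) auto
  qed
  have wt: "weight Fs' < weight Fs"
  proof -
    have "(\<Sum>i<length Fs. card (fst (Fs'!i))) < (\<Sum>i<length Fs. card (fst (Fs!i)))"
    proof (rule sum_strict_mono_ex1)
      show "\<forall>i\<in>{..<length Fs}. card (fst (Fs'!i)) \<le> card (fst (Fs!i))"
        using nth' cj by auto
      show "\<exists>i\<in>{..<length Fs}. card (fst (Fs'!i)) < card (fst (Fs!i))"
      proof
        show "card (fst (Fs'!j)) < card (fst (Fs!j))" using nth'[OF j(1)] cj by simp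
      qed (use j in simp)
    qed simp
    then show ?thesis unfolding weight_def len .
  qed
  show ?thesis using rep' num wt by blast
qed


lemma main_lemma:
  assumes nc: "\<not> has_unary_cartesian_factor D \<Sigma> R"
  shows "subternaric_bond_rep D \<Sigma> R Fs \<Longrightarrow> \<exists>Fs'. subternaric_bond_rep D \<Sigma> R Fs'
           \<and> num_ternary Fs' \<le> num_ternary Fs \<and> (even (num_ternary Fs') \<longleftrightarrow> even (card \<Sigma>))"
proof (induction "weight Fs" arbitrary: Fs rule: less_induct)
  case less
  show ?case
  proof (cases "\<exists>k<length Fs. card (fst (Fs!k)) = 1")
    case True
    then obtain k where k: "k < length Fs" "card (fst (Fs!k)) = 1" by blast
    then obtain x where kx: "fst (Fs!k) = {x}" by (meson card_1_singletonE)
    have "{k} \<subseteq> {i. i < length Fs \<and> x \<in> fst (Fs ! i)}" using k kx by auto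
    then have "1 \<le> occ Fs x" unfolding occ_def
      using card_mono[of "{i. i < length Fs \<and> x \<in> fst (Fs ! i)}" "{k}"]
      by (metis (no_types, lifting) One_nat_def card.empty card_insert_disjoint empty_iff finite.emptyI
          finite_nat_set_iff_bounded mem_Collect_eq)
    moreover have "occ Fs x \<le> 2" using less.prems unfolding subternaric_bond_rep_def bondable_def by auto
    ultimately consider "occ Fs x = 1" | "occ Fs x = 2" by linarith
    then show ?thesis
    proof cases
      case 1
      then show ?thesis using free_unary_cart[OF less.prems k(1) kx] nc by blast
    next
      case 2
      from reduce[OF less.prems k(1) kx 2] obtain Fs' where
        "subternaric_bond_rep D \<Sigma> R Fs'" "num_ternary Fs' \<le> num_ternary Fs" "weight Fs' < weight Fs"
        by blast
      with less.hyps[of Fs'] show ?thesis by (meson le_trans)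
    qed
  next
    case False
    then show ?thesis using parity_lemma[OF less.prems] less.prems by blast
  qed
qed

theorem corollary42:
  fixes D :: "'d set" and \<Sigma> :: "nat set" and R :: "(nat \<Rightarrow> 'd) set"
  assumes "finite \<Sigma>"
    and "R \<subseteq> tuples D \<Sigma>"
    and "ter D \<Sigma> R \<noteq> \<infinity>"
    and "\<not> has_unary_cartesian_factor D \<Sigma> R"
  shows "even (the_enat (ter D \<Sigma> R)) \<longleftrightarrow> even (card \<Sigma>)"
proof -
  let ?A = "{enat (num_ternary Fs) | Fs. subternaric_bond_rep D \<Sigma> R Fs}"
  have ne: "?A \<noteq> {}"
  proof
    assume "?A = {}"
    then have "ter D \<Sigma> R = \<infinity>" unfolding ter_def by (simp add: top_enat_def)
    with assms(3) show False by simp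
  qed
  have "Inf ?A \<in> ?A"
  proof -
    from ne obtain a where a: "a \<in> ?A" by blast
    have "Inf ?A = (LEAST x. x \<in> ?A)" using ne by (simp only: Inf_enat_def if_False)
    then show ?thesis using LeastI[of "\<lambda>x. x \<in> ?A" a, OF a] by simp
  qed
  then obtain Fs where Fs: "subternaric_bond_rep D \<Sigma> R Fs" and t: "ter D \<Sigma> R = enat (num_ternary Fs)"
    unfolding ter_def by auto
  obtain Fs' where Fs': "subternaric_bond_rep D \<Sigma> R Fs'" "num_ternary Fs' \<le> num_ternary Fs"
    and par: "even (num_ternary Fs') \<longleftrightarrow> even (card \<Sigma>)"
    using main_lemma[OF assms(4) Fs] by blast
  have "ter D \<Sigma> R \<le> enat (num_ternary Fs')" unfolding ter_def using Fs'(1)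
    by (intro Inf_lower) blast
  then have "num_ternary Fs = num_ternary Fs'" using t Fs'(2) by simp
  then show ?thesis using t par by simp
qed

end
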